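(* Let $X=(X_1,\ldots,X_q)^T$ be a vector of mutually independent Poisson random variables with means $\lambda=(\lambda_1,\ldots,\lambda_q)^T$. Let $A=(a_{i,j}) \in \{0,1\}^{\ell\times q}$ have pairwise distinct nonzero columns and let $Y = AX$, with cumulant generating function $K_Y(t)=\log E[e^{t^TY}]$. Let $\mathcal B_0 = \{0,1\}^\ell\setminus\{0\}$ with the componentwise order $\le$ (and $<$ meaning $\le$ and $\neq$), let $\mathcal A\subseteq\mathcal B_0$ be the set of columns of $A$, and let $\rho:\mathcal B_0\to\mathbb{R}$ be $\rho(a_{*,j})=\lambda_j$ and $\rho(v)=0$ for $v\notin\mathcal A$. For $v\in\mathcal B_0$ with support $\{i_1<\cdots<i_p\}$ let $\phi(v)=\frac{\partial^p}{\partial t_{i_1}\cdots\partial t_{i_p}}K_Y(t)\big|_{t=0}$. Let $\uparrow v=\{w\in\mathcal B_0: v\le w\}$ and define $\psi:\mathcal B_0\to\mathbb{R}$ as the solution of the recurrence \[\psi(v) = \phi(v) - \sum_{w\in \uparrow v\setminus\{v\}}\psi(w)\quad (v\in\mathcal B_0).\] Then $\psi(v)=\rho(v)$ for every $v\in\mathcal B_0$. Moreover, if $\psi(v)\neq 0$, then $v\in\mathcal A$.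
   Context: The recurrence determines $\psi$ uniquely since $\mathcal B_0$ is finite and $\psi(v)$ depends only on values at strictly larger elements. $a_{*,j}$ is the $j$-th column of $A$. *)

theory Defs
  imports "HOL-Probability.Probability"
begin

text \<open>Vectors in R^l (and {0,1}^l) are functions nat => real that vanish outside {..<l}.
  The componentwise order is the pointwise order on functions.\<close>

definition B0 :: "nat \<Rightarrow> (nat \<Rightarrow> real) set" where
  "B0 l = {v. (\<forall>i<l. v i = 0 \<or> v i = 1) \<and> (\<forall>i\<ge>l. v i = 0) \<and> v \<noteq> (\<lambda>_. 0)}"

definition col :: "nat \<Rightarrow> (nat \<Rightarrow> nat \<Rightarrow> real) \<Rightarrow> nat \<Rightarrow> (nat \<Rightarrow> real)" where
  "col l A j = (\<lambda>i. if i < l then A i j else 0)"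

definition col_set :: "nat \<Rightarrow> nat \<Rightarrow> (nat \<Rightarrow> nat \<Rightarrow> real) \<Rightarrow> (nat \<Rightarrow> real) set" where
  "col_set l q A = col l A ` {..<q}"

text \<open>rho(a_{*,j}) = lambda_j, rho(v) = 0 for v not a column (columns are pairwise distinct).\<close>
definition rho :: "nat \<Rightarrow> nat \<Rightarrow> (nat \<Rightarrow> nat \<Rightarrow> real) \<Rightarrow> (nat \<Rightarrow> real) \<Rightarrow> (nat \<Rightarrow> real) \<Rightarrow> real" where
  "rho l q A lam v = (if v \<in> col_set l q A then lam (THE j. j < q \<and> col l A j = v) else 0)"

definition partial :: "nat \<Rightarrow> ((nat \<Rightarrow> real) \<Rightarrow> real) \<Rightarrow> (nat \<Rightarrow> real) \<Rightarrow> real" where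
  "partial i f t = deriv (\<lambda>s. f (t(i := s))) (t i)"

definition mixed_partial :: "nat \<Rightarrow> (nat \<Rightarrow> real) \<Rightarrow> ((nat \<Rightarrow> real) \<Rightarrow> real) \<Rightarrow> (nat \<Rightarrow> real) \<Rightarrow> real" where
  "mixed_partial l v f = foldr partial (sorted_list_of_set {i. i < l \<and> v i \<noteq> 0}) f"

definition cgf_Y :: "'a measure \<Rightarrow> nat \<Rightarrow> nat \<Rightarrow> (nat \<Rightarrow> nat \<Rightarrow> real) \<Rightarrow> (nat \<Rightarrow> 'a \<Rightarrow> nat) \<Rightarrow> (nat \<Rightarrow> real) \<Rightarrow> real" where
  "cgf_Y M l q A X t =
     ln (prob_space.expectation M (\<lambda>\<omega>. exp (\<Sum>i<l. t i * (\<Sum>j<q. A i j * real (X j \<omega>)))))"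

definition phi :: "'a measure \<Rightarrow> nat \<Rightarrow> nat \<Rightarrow> (nat \<Rightarrow> nat \<Rightarrow> real) \<Rightarrow> (nat \<Rightarrow> 'a \<Rightarrow> nat) \<Rightarrow> (nat \<Rightarrow> real) \<Rightarrow> real" where
  "phi M l q A X v = mixed_partial l v (cgf_Y M l q A X) (\<lambda>_. 0)"

end

theory Submission
  imports Defs
begin

lemma poisson_mgf:
  fixes r c :: real assumes r: "0 < r"
  shows "integrable (measure_pmf (poisson_pmf r)) (\<lambda>n. exp (c * real n))"
    and "(\<integral>n. exp (c * real n) \<partial>measure_pmf (poisson_pmf r)) = exp (r * (exp c - 1))"
proof -
  define g where "g n = pmf (poisson_pmf r) n * exp (c * real n)" for n
  have g: "g n = (r * exp c) ^ n /\<^sub>R fact n * exp (-r)" for n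
    unfolding g_def using r by (simp add: power_mult_distrib exp_of_nat_mult[symmetric] field_simps mult.commute)
  have "(\<lambda>n. (r * exp c) ^ n /\<^sub>R fact n) sums exp (r * exp c)" by (rule exp_converges)
  hence s: "g sums (exp (r * exp c) * exp (-r))" unfolding g by (rule sums_mult2)
  have gnn: "g n \<ge> 0" for n unfolding g_def by simp
  have ic: "integrable (count_space UNIV) g"
    unfolding integrable_count_space_nat_iff using s gnn by (simp add: sums_summable)
  show i: "integrable (measure_pmf (poisson_pmf r)) (\<lambda>n. exp (c * real n))"
    unfolding measure_pmf_eq_density
    by (subst integrable_density) (use ic in \<open>auto simp: g_def[abs_def]\<close>)
  have "(\<integral>n. exp (c * real n) \<partial>measure_pmf (poisson_pmf r)) = (\<integral>n. g n \<partial>count_space UNIV)"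
    unfolding measure_pmf_eq_density
    by (subst integral_density) (auto simp: g_def[abs_def])
  also have "\<dots> = (\<Sum>n. g n)" by (rule integral_count_space_nat[OF ic])
  also have "\<dots> = exp (r * exp c) * exp (-r)" using s sums_unique by metis
  also have "\<dots> = exp (r * (exp c - 1))" by (simp add: exp_add[symmetric] algebra_simps)
  finally show "(\<integral>n. exp (c * real n) \<partial>measure_pmf (poisson_pmf r)) = exp (r * (exp c - 1))" .
qed


lemma cgf_formula:
  assumes "prob_space M"
    and lam: "\<And>j. j < q \<Longrightarrow> lam j > 0"
    and meas: "\<And>j. j < q \<Longrightarrow> X j \<in> measurable M (count_space UNIV)"
    and dis: "\<And>j. j < q \<Longrightarrow> distr M (count_space UNIV) (X j) = measure_pmf (poisson_pmf (lam j))"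
    and ind: "prob_space.indep_vars M (\<lambda>_. count_space UNIV) X {..<q}"
  shows "cgf_Y M l q A X t = (\<Sum>j<q. lam j * exp (\<Sum>i<l. t i * A i j)) - (\<Sum>j<q. lam j)"
proof -
  interpret prob_space M by fact
  define c where "c j = (\<Sum>i<l. t i * A i j)" for j
  have eq: "(\<lambda>\<omega>. exp (\<Sum>i<l. t i * (\<Sum>j<q. A i j * real (X j \<omega>)))) =
        (\<lambda>\<omega>. \<Prod>j<q. exp (c j * real (X j \<omega>)))"
  proof
    fix \<omega>
    have "(\<Sum>i<l. t i * (\<Sum>j<q. A i j * real (X j \<omega>))) = (\<Sum>j<q. c j * real (X j \<omega>))"
      unfolding c_def sum_distrib_left sum_distrib_right
      by (subst sum.swap) (simp add: mult.assoc)
    thus "exp (\<Sum>i<l. t i * (\<Sum>j<q. A i j * real (X j \<omega>))) = (\<Prod>j<q. exp (c j * real (X j \<omega>)))"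
      by (simp add: exp_sum)
  qed
  have ind2: "indep_vars (\<lambda>_. borel) (\<lambda>j \<omega>. exp (c j * real (X j \<omega>))) {..<q}"
    by (rule indep_vars_compose2[OF ind]) simp
  have intj: "integrable M (\<lambda>\<omega>. exp (c j * real (X j \<omega>)))"
    and intg: "(\<integral>\<omega>. exp (c j * real (X j \<omega>)) \<partial>M) = exp (lam j * (exp (c j) - 1))" if j: "j < q" for j
  proof -
    have "integrable (distr M (count_space UNIV) (X j)) (\<lambda>n. exp (c j * real n))"
      using dis[OF j] poisson_mgf(1)[OF lam[OF j]] by simp
    thus "integrable M (\<lambda>\<omega>. exp (c j * real (X j \<omega>)))"
      by (subst (asm) integrable_distr_eq[OF meas[OF j]]) simp_all
    have "(\<integral>\<omega>. exp (c j * real (X j \<omega>)) \<partial>M) = (\<integral>n. exp (c j * real n) \<partial>distr M (count_space UNIV) (X j))"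
      by (subst integral_distr[OF meas[OF j]]) simp_all
    also have "\<dots> = exp (lam j * (exp (c j) - 1))"
      using dis[OF j] poisson_mgf(2)[OF lam[OF j]] by simp
    finally show "(\<integral>\<omega>. exp (c j * real (X j \<omega>)) \<partial>M) = exp (lam j * (exp (c j) - 1))" .
  qed
  have "expectation (\<lambda>\<omega>. exp (\<Sum>i<l. t i * (\<Sum>j<q. A i j * real (X j \<omega>)))) =
        (\<Prod>j<q. exp (lam j * (exp (c j) - 1)))"
    unfolding eq
    by (subst indep_vars_lebesgue_integral[OF _ ind2]) (auto simp: intj intg)
  also have "\<dots> = exp (\<Sum>j<q. lam j * (exp (c j) - 1))" by (simp add: exp_sum)
  finally show ?thesis
    unfolding cgf_Y_def by (simp add: right_diff_distrib sum_subtractf c_def)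
qed
definition H :: "nat \<Rightarrow> nat \<Rightarrow> (nat \<Rightarrow> nat \<Rightarrow> real) \<Rightarrow> (nat \<Rightarrow> real) \<Rightarrow> real \<Rightarrow> (nat \<Rightarrow> real) \<Rightarrow> real" where
  "H l q A d C t = (\<Sum>j<q. d j * exp (\<Sum>k<l. t k * A k j)) - C"

lemma partial_H:
  assumes i: "i < l"
  shows "partial i (H l q A d C) = H l q A (\<lambda>j. d j * A i j) 0"
proof
  fix t
  have split: "(\<Sum>k<l. (t(i := s)) k * A k j) = s * A i j + (\<Sum>k\<in>{..<l}-{i}. t k * A k j)" for s j
    using i by (subst sum.remove[of _ i]) auto
  have "((\<lambda>s. H l q A d C (t(i := s))) has_real_derivative
        (\<Sum>j<q. d j * (exp (t i * A i j + (\<Sum>k\<in>{..<l}-{i}. t k * A k j)) * A i j))) (at (t i))"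
    unfolding H_def split
    by (auto intro!: derivative_eq_intros sum.cong simp: mult_ac)
  moreover have "(\<Sum>j<q. d j * (exp (t i * A i j + (\<Sum>k\<in>{..<l}-{i}. t k * A k j)) * A i j))
      = H l q A (\<lambda>j. d j * A i j) 0 t"
    unfolding H_def using split[of "t i"] by (simp add: mult_ac)
  ultimately show "partial i (H l q A d C) t = H l q A (\<lambda>j. d j * A i j) 0 t"
    unfolding partial_def by (simp add: DERIV_imp_deriv)
qed

lemma foldr_partial_H:
  assumes "\<forall>i\<in>set is. i < l"
  shows "foldr partial is (H l q A d C) =
         H l q A (\<lambda>j. d j * prod_list (map (\<lambda>i. A i j) is)) (if is = [] then C else 0)"
  using assms
proof (induction "is")
  case Nil
  then show ?case by simp
next
  case (Cons i "is")
  then show ?case by (simp add: partial_H mult_ac)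
qed


lemma prod_list_sorted: "finite (S::nat set) \<Longrightarrow> prod_list (map g (sorted_list_of_set S)) = prod g S"
  by (metis prod.distinct_set_conv_list
    sorted_list_of_set.distinct_sorted_key_list_of_set
    sorted_list_of_set.set_sorted_key_list_of_set)

lemma finite_B0: "finite (B0 l)"
proof (rule finite_subset)
  show "B0 l \<subseteq> {f. \<forall>x. (x \<in> {..<l} \<longrightarrow> f x \<in> {0,1}) \<and> (x \<notin> {..<l} \<longrightarrow> f x = (0::real))}"
    unfolding B0_def by auto
  show "finite {f. \<forall>x. (x \<in> {..<l} \<longrightarrow> f x \<in> {0,1}) \<and> (x \<notin> {..<l} \<longrightarrow> f x = (0::real))}"
    by (rule finite_set_of_finite_funs) auto
qed

lemma B0_supp_ne:
  assumes "v \<in> B0 l" shows "{i. i < l \<and> v i \<noteq> 0} \<noteq> {}"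
proof
  assume "{i. i < l \<and> v i \<noteq> 0} = {}"
  hence "v = (\<lambda>_. 0)" using assms unfolding B0_def by (auto simp: fun_eq_iff not_less)
  thus False using assms unfolding B0_def by auto
qed

lemma prod_col:
  assumes v: "v \<in> B0 l" and A01: "\<And>i. i < l \<Longrightarrow> A i j = 0 \<or> A i j = 1"
  shows "(\<Prod>i\<in>{i. i < l \<and> v i \<noteq> 0}. A i j) = (if v \<le> col l A j then 1 else 0)"
proof (cases "v \<le> col l A j")
  case True
  have "A i j = 1" if "i < l" "v i \<noteq> 0" for i
  proof -
    have "v i = 1" using v that unfolding B0_def by auto
    moreover have "v i \<le> col l A j i" using True by (simp add: le_fun_def)
    ultimately show ?thesis using A01[OF \<open>i < l\<close>] \<open>i < l\<close> by (auto simp: col_def)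
  qed
  thus ?thesis using True by (intro trans[OF prod.neutral]) auto
next
  case False
  then obtain i where i: "\<not> v i \<le> col l A j i" by (auto simp: le_fun_def)
  have il: "i < l" using i v unfolding B0_def col_def by (cases "i < l") auto
  have "A i j = 0" "v i \<noteq> 0" using i il A01[OF il] v unfolding B0_def col_def by auto
  thus ?thesis using False il by (intro trans[OF prod_zero]) auto
qed

lemma col_B0:
  assumes "\<And>i. i < l \<Longrightarrow> A i j = 0 \<or> A i j = 1" "col l A j \<noteq> (\<lambda>_. 0)"
  shows "col l A j \<in> B0 l"
  using assms unfolding B0_def col_def by auto

lemma rho_col:
  assumes "j < q" and inj: "\<And>j k. j < q \<Longrightarrow> k < q \<Longrightarrow> j \<noteq> k \<Longrightarrow> col l A j \<noteq> col l A k"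
  shows "rho l q A lam (col l A j) = lam j"
proof -
  have "(THE k. k < q \<and> col l A k = col l A j) = j"
    using assms by (intro the_equality) auto
  thus ?thesis using assms(1) unfolding rho_def col_set_def by auto
qed

theorem proposition5:
  fixes M :: "'a measure" and l q :: nat and A :: "nat \<Rightarrow> nat \<Rightarrow> real"
    and X :: "nat \<Rightarrow> 'a \<Rightarrow> nat" and lam :: "nat \<Rightarrow> real" and psi :: "(nat \<Rightarrow> real) \<Rightarrow> real"
  assumes "prob_space M"
    and "\<And>j. j < q \<Longrightarrow> lam j > 0"
    and "\<And>j. j < q \<Longrightarrow> X j \<in> measurable M (count_space UNIV)"
    and "\<And>j. j < q \<Longrightarrow> distr M (count_space UNIV) (X j) = measure_pmf (poisson_pmf (lam j))"
    and "prob_space.indep_vars M (\<lambda>_. count_space UNIV) X {..<q}"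
    and "\<And>i j. i < l \<Longrightarrow> j < q \<Longrightarrow> A i j = 0 \<or> A i j = 1"
    and "\<And>j. j < q \<Longrightarrow> col l A j \<noteq> (\<lambda>_. 0)"
    and "\<And>j k. j < q \<Longrightarrow> k < q \<Longrightarrow> j \<noteq> k \<Longrightarrow> col l A j \<noteq> col l A k"
    and "\<And>v. v \<in> B0 l \<Longrightarrow>
           psi v = phi M l q A X v - (\<Sum>w\<in>{w \<in> B0 l. v \<le> w \<and> w \<noteq> v}. psi w)"
  shows "(\<forall>v \<in> B0 l. psi v = rho l q A lam v) \<and>
         (\<forall>v \<in> B0 l. psi v \<noteq> 0 \<longrightarrow> v \<in> col_set l q A)"
proof -
  note A01 = assms(6)
  have cgf: "cgf_Y M l q A X = H l q A lam (\<Sum>j<q. lam j)"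
    using cgf_formula[OF assms(1-5)] by (auto simp: H_def fun_eq_iff)
  have phi_eq: "phi M l q A X v = (\<Sum>j\<in>{j. j < q \<and> v \<le> col l A j}. lam j)" if v: "v \<in> B0 l" for v
  proof -
    define S where "S = {i. i < l \<and> v i \<noteq> 0}"
    have fS: "finite S" unfolding S_def by auto
    have ne: "sorted_list_of_set S \<noteq> []" using B0_supp_ne[OF v] fS unfolding S_def by auto
    have sl: "\<forall>i\<in>set (sorted_list_of_set S). i < l" using fS unfolding S_def by auto
    have "phi M l q A X v = (\<Sum>j<q. lam j * prod_list (map (\<lambda>i. A i j) (sorted_list_of_set S)))"
      unfolding phi_def mixed_partial_def S_def[symmetric] cgf foldr_partial_H[OF sl]
      using ne by (simp add: H_def)
    also have "\<dots> = (\<Sum>j<q. lam j * (\<Prod>i\<in>S. A i j))"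
      using fS by (simp add: prod_list_sorted)
    also have "\<dots> = (\<Sum>j<q. if v \<le> col l A j then lam j else 0)"
      by (intro sum.cong refl) (simp add: S_def prod_col[OF v] A01)
    also have "\<dots> = (\<Sum>j\<in>{j. j < q \<and> v \<le> col l A j}. lam j)"
      by (simp add: sum.inter_filter[symmetric] lessThan_def Collect_conj_eq[symmetric])
    finally show ?thesis .
  qed
  have up: "(\<Sum>w\<in>{w \<in> B0 l. v \<le> w}. rho l q A lam w) = (\<Sum>j\<in>{j. j < q \<and> v \<le> col l A j}. lam j)"
    if v: "v \<in> B0 l" for v
  proof -
    have inj: "inj_on (col l A) {j. j < q \<and> v \<le> col l A j}"
      using assms(8) by (auto simp: inj_on_def)
    have "(\<Sum>j\<in>{j. j < q \<and> v \<le> col l A j}. lam j) = (\<Sum>j\<in>{j. j < q \<and> v \<le> col l A j}. rho l q A lam (col l A j))"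
      using rho_col[OF _ assms(8)] by (intro sum.cong) auto
    also have "\<dots> = (\<Sum>w\<in>col l A ` {j. j < q \<and> v \<le> col l A j}. rho l q A lam w)"
      using sum.reindex[OF inj, of "rho l q A lam"] by (simp add: o_def)
    also have "\<dots> = (\<Sum>w\<in>{w \<in> B0 l. v \<le> w}. rho l q A lam w)"
    proof (rule sum.mono_neutral_left)
      show "finite {w \<in> B0 l. v \<le> w}" using finite_B0 by auto
      show "col l A ` {j. j < q \<and> v \<le> col l A j} \<subseteq> {w \<in> B0 l. v \<le> w}"
        using col_B0 A01 assms(7) by auto
      show "\<forall>w\<in>{w \<in> B0 l. v \<le> w} - col l A ` {j. j < q \<and> v \<le> col l A j}. rho l q A lam w = 0"
        unfolding rho_def col_set_def by auto
    qed
    finally show ?thesis by simp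
  qed
  define f where "f v = l - card {i. i < l \<and> v i \<noteq> 0}" for v :: "nat \<Rightarrow> real"
  have main: "v \<in> B0 l \<longrightarrow> psi v = rho l q A lam v" for v
  proof (induction v rule: measure_induct_rule[where f = f])
    case (less v)
    show ?case
    proof
      assume v: "v \<in> B0 l"
      define U' where "U' = {w \<in> B0 l. v \<le> w \<and> w \<noteq> v}"
      have U: "{w \<in> B0 l. v \<le> w} = insert v U'" "v \<notin> U'" "finite U'"
        using v finite_B0 unfolding U'_def by auto
      have IH: "psi w = rho l q A lam w" if w: "w \<in> U'" for w
      proof -
        have wB: "w \<in> B0 l" "v \<le> w" "w \<noteq> v" using w unfolding U'_def by auto
        have sub: "{i. i < l \<and> v i \<noteq> 0} \<subseteq> {i. i < l \<and> w i \<noteq> 0}"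
        proof safe
          fix i assume "i < l" "v i \<noteq> 0" "w i = 0"
          moreover have "v i \<le> w i" using wB by (simp add: le_fun_def)
          ultimately show False using v \<open>i < l\<close> unfolding B0_def by force
        qed
        obtain i where "w i \<noteq> v i" using wB by auto
        moreover have "v i \<le> w i" using wB by (simp add: le_fun_def)
        ultimately have i: "i < l" "v i = 0" "w i \<noteq> 0"
          using v wB(1) unfolding B0_def by (cases "i < l"; force)+
        have "{i. i < l \<and> v i \<noteq> 0} \<subset> {i. i < l \<and> w i \<noteq> 0}" using sub i by auto
        hence "card {i. i < l \<and> v i \<noteq> 0} < card {i. i < l \<and> w i \<noteq> 0}"
          by (intro psubset_card_mono) auto
        moreover have "card {i. i < l \<and> w i \<noteq> 0} \<le> l"
          using card_mono[of "{..<l}" "{i. i < l \<and> w i \<noteq> 0}"] by auto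
        ultimately have "f w < f v" unfolding f_def by linarith
        thus ?thesis using less wB(1) by blast
      qed
      have "psi v = phi M l q A X v - (\<Sum>w\<in>U'. psi w)" using assms(9)[OF v] unfolding U'_def .
      also have "\<dots> = (\<Sum>w\<in>{w \<in> B0 l. v \<le> w}. rho l q A lam w) - (\<Sum>w\<in>U'. rho l q A lam w)"
        using IH phi_eq[OF v] up[OF v] by simp
      also have "\<dots> = rho l q A lam v" using U by simp
      finally show "psi v = rho l q A lam v" .
    qed
  qed
  show ?thesis
    using main unfolding rho_def by auto
qed

end
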